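(* Let $p_1,\dots,p_n$ be distinct primes with $p_i\equiv 5\pmod 8$ for all $i$, let $D=p_1\cdots p_n$, and let \[\mathcal{G}=\{a\in\mathbb{Z}: 1\leq a\leq D,\ \left(\tfrac{p_i}{a}\right)=1\text{ for all }1\leq i\leq n\}.\] Then $\mathfrak{s}_1=\sum_{a\in\mathcal{G}}a^2$ satisfies $\mathfrak{s}_1\equiv 2^{n-1}\mathfrak{t}\pmod 4$ for some odd integer $\mathfrak{t}$. In particular, if $n\geq 3$ then $4\mid\mathfrak{s}_1$.
   Context: $\left(\frac{p}{a}\right)$ denotes the Kronecker–Jacobi symbol. *)

theory Defs
  imports "HOL-Number_Theory.Number_Theory"
begin

definition kronecker2 :: "int \<Rightarrow> int" where
  "kronecker2 a = (if even a then 0 else if a mod 8 = 1 \<or> a mod 8 = 7 then 1 else -1)"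

definition kronecker :: "int \<Rightarrow> nat \<Rightarrow> int" where
  "kronecker a n = (\<Prod>p\<in>prime_factors n.
      (if p = 2 then kronecker2 a else Legendre a (int p)) ^ multiplicity p n)"

end

theory Submission
  imports Defs
begin

lemma Legendre_range: "Legendre a p \<in> {-1,0,1}"
  by (simp add: Legendre_def)

lemma cong_small_eq:
  fixes x y :: int and p :: nat
  assumes "[x = y] (mod int p)" "x \<in> {-1,0,1}" "y \<in> {-1,0,1}" "p > 2"
  shows "x = y"
proof -
  have "int p dvd (x - y)" using assms(1) by (simp add: cong_iff_dvd_diff)
  moreover have "x \<le> 1" "x \<ge> -1" "y \<le> 1" "y \<ge> -1" using assms(2,3) by auto
  ultimately show ?thesis
  proof (cases "x - y = 0")
    case False
    from dvd_imp_le_int[OF False \<open>int p dvd (x - y)\<close>] have "\<bar>int p\<bar> \<le> \<bar>x - y\<bar>" .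
    thus ?thesis using \<open>x \<le> 1\<close> \<open>x \<ge> -1\<close> \<open>y \<le> 1\<close> \<open>y \<ge> -1\<close> assms(4) by linarith
  qed simp
qed

lemma Legendre_mult:
  assumes "prime p" "p > 2"
  shows "Legendre (a*b) (int p) = Legendre a (int p) * Legendre b (int p)"
proof -
  have "[Legendre (a*b) (int p) = (a*b) ^ ((p - 1) div 2)] (mod int p)"
    using euler_criterion assms by blast
  also have "(a*b) ^ ((p - 1) div 2) = a ^ ((p - 1) div 2) * b ^ ((p - 1) div 2)"
    by (simp add: power_mult_distrib)
  also have "[\<dots> = Legendre a (int p) * Legendre b (int p)] (mod int p)"
    using euler_criterion[OF assms, of a] euler_criterion[OF assms, of b]
    by (intro cong_mult) (auto simp: cong_sym)
  finally show ?thesis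
  proof (rule cong_small_eq)
    have "Legendre a (int p) \<in> {-1,0,1}" "Legendre b (int p) \<in> {-1,0,1}" by (rule Legendre_range)+
    thus "Legendre a (int p) * Legendre b (int p) \<in> {-1,0,1}" by auto
  qed (use assms Legendre_range in auto)
qed

lemma Legendre_one:
  assumes "p > 1" shows "Legendre 1 (int p) = 1"
proof -
  have "QuadRes (int p) 1" unfolding QuadRes_def by (rule exI[of _ 1]) simp
  moreover have "\<not> [1 = 0] (mod int p)" using assms by (simp add: cong_def)
  ultimately show ?thesis by (simp add: Legendre_def)
qed

lemma Legendre_cong:
  assumes "[a = b] (mod p)" shows "Legendre a p = Legendre b p"
proof -
  have "[a = 0] (mod p) \<longleftrightarrow> [b = 0] (mod p)" using assms
    by (meson cong_sym cong_trans)
  moreover have "QuadRes p a \<longleftrightarrow> QuadRes p b" using assms unfolding QuadRes_def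
    by (meson cong_sym cong_trans)
  ultimately show ?thesis by (simp add: Legendre_def)
qed

lemma Legendre_prod:
  assumes "prime p" "p > 2" "finite A"
  shows "Legendre (\<Prod>i\<in>A. f i) (int p) = (\<Prod>i\<in>A. Legendre (f i) (int p))"
proof -
  have 1: "Legendre 1 (int p) = 1" using Legendre_one prime_gt_1_nat assms by blast
  show ?thesis using assms(3) by (induction A rule: finite_induct)
    (auto simp: 1 Legendre_mult assms)
qed

lemma Legendre_power:
  assumes "prime p" "p > 2"
  shows "Legendre (a ^ k) (int p) = Legendre a (int p) ^ k"
proof -
  have 1: "Legendre 1 (int p) = 1" using Legendre_one prime_gt_1_nat assms by blast
  show ?thesis by (induction k) (auto simp: 1 Legendre_mult assms)
qed

lemma Legendre_minus1:
  assumes "prime p" "p mod 4 = 1"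
  shows "Legendre (-1) (int p) = 1"
proof -
  have p2: "p > 2" using assms prime_gt_1_nat[OF assms(1)] by presburger
  have "[Legendre (-1) (int p) = (-1) ^ ((p - 1) div 2)] (mod int p)"
    using euler_criterion assms p2 by blast
  moreover have "even ((p - 1) div 2)" using assms by presburger
  ultimately have "[Legendre (-1) (int p) = 1] (mod int p)" by simp
  thus ?thesis by (rule cong_small_eq) (use p2 Legendre_range in auto)
qed

lemma Legendre_swap:
  assumes "prime p" "p mod 4 = 1" "prime q" "q > 2"
  shows "Legendre (int p) (int q) = Legendre (int q) (int p)"
proof (cases "p = q")
  case False
  have p2: "p > 2" using assms prime_gt_1_nat[OF assms(1)] by presburger
  have "Legendre (int p) (int q) * Legendre (int q) (int p) = (-1::int) ^ ((p - 1) div 2 * ((q - 1) div 2))"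
    using Quadratic_Reciprocity[of p q] assms p2 False by auto
  moreover have "even ((p - 1) div 2)" using assms by presburger
  hence "even ((p - 1) div 2 * ((q - 1) div 2))" by simp
  ultimately have "Legendre (int p) (int q) * Legendre (int q) (int p) = 1" by simp
  thus ?thesis using Legendre_range[of "int p" "int q"] Legendre_range[of "int q" "int p"] by auto
qed simp

lemma kronecker_odd:
  assumes "prime p" "p mod 4 = 1" "odd m" 
  shows "kronecker (int p) m = Legendre (int m) (int p)"
proof -
  have p2: "p > 2" using assms prime_gt_1_nat[OF assms(1)] by presburger
  have m0: "m > 0" using assms by presburger
  have "kronecker (int p) m = (\<Prod>q\<in>prime_factors m. Legendre (int q) (int p) ^ multiplicity q m)"
    unfolding kronecker_def
  proof (rule prod.cong)
    fix q assume q: "q \<in> prime_factors m"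
    hence qp: "prime q" "q dvd m" by auto
    hence "q \<noteq> 2" using assms(3) by auto
    hence "q > 2" using prime_gt_1_nat[OF qp(1)] by linarith
    thus "(if q = 2 then kronecker2 (int p) else Legendre (int p) (int q)) ^ multiplicity q m =
          Legendre (int q) (int p) ^ multiplicity q m"
      using Legendre_swap[OF assms(1,2) qp(1)] by simp
  qed simp
  also have "\<dots> = (\<Prod>q\<in>prime_factors m. Legendre (int q ^ multiplicity q m) (int p))"
    using Legendre_power[OF assms(1) p2] by simp
  also have "\<dots> = Legendre (\<Prod>q\<in>prime_factors m. int q ^ multiplicity q m) (int p)"
    using Legendre_prod[OF assms(1) p2, of "prime_factors m" "\<lambda>q. int q ^ multiplicity q m"] by simp
  also have "(\<Prod>q\<in>prime_factors m. int q ^ multiplicity q m) = int m"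
  proof -
    have "int m = int (\<Prod>q\<in>prime_factors m. q ^ multiplicity q m)"
      using prime_factorization_nat[OF m0] by simp
    thus ?thesis by (simp add: of_nat_prod)
  qed
  finally show ?thesis .
qed

definition QRs :: "nat \<Rightarrow> nat set" where
  "QRs p = {x \<in> totatives p. Legendre (int x) (int p) = 1}"

lemma sq_inj:
  fixes p h :: nat
  assumes "prime p" "2 * h < p"
  shows "inj_on (\<lambda>x. x^2 mod p) {1..h}"
proof (rule inj_onI)
  have pi: "prime (int p)" using assms(1) by simp
  have ph: "2 * h < p" by fact
  fix x y assume x: "x \<in> {1..h}" and y: "y \<in> {1..h}" and e: "x^2 mod p = y^2 mod p"
  have "[x^2 = y^2] (mod p)" using e by (simp add: cong_def)
  hence "[int (x^2) = int (y^2)] (mod int p)" by (simp only: cong_int_iff)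
  hence "[int x ^ 2 = int y ^ 2] (mod int p)" by simp
  hence dv: "int p dvd int x ^ 2 - int y ^ 2" by (simp add: cong_iff_dvd_diff)
  have eq: "int x ^ 2 - int y ^ 2 = (int x - int y) * (int x + int y)"
    by (simp add: power2_eq_square algebra_simps)
  have "int p dvd (int x - int y) * (int x + int y)" using dv by (simp only: eq)
  hence "int p dvd (int x - int y) \<or> int p dvd (int x + int y)"
    by (rule prime_dvd_multD[OF pi])
  moreover have xb: "x \<le> h" "y \<le> h" "1 \<le> x" "1 \<le> y" using x y by auto
  moreover {
    assume d: "int p dvd (int x - int y)"
    have "int x - int y = 0"
    proof (rule ccontr)
      assume "int x - int y \<noteq> 0"
      from dvd_imp_le_int[OF this d] have "\<bar>int p\<bar> \<le> \<bar>int x - int y\<bar>" .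
      thus False using xb ph by linarith
    qed
  }
  moreover {
    assume d: "int p dvd (int x + int y)"
    have "int x + int y \<noteq> 0" using xb by linarith
    from dvd_imp_le_int[OF this d] have "\<bar>int p\<bar> \<le> \<bar>int x + int y\<bar>" .
    hence False using xb ph by linarith
  }
  ultimately have "int x - int y = 0" by blast
  thus "x = y" by simp
qed

lemma sq_fwd:
  fixes p h x :: nat
  assumes "prime p" "2 * h < p" "x \<in> {1..h}"
  shows "x^2 mod p \<in> QRs p"
proof -
  have ph: "2 * h < p" by fact
  have nd: "\<not> p dvd x^2"
  proof
    assume "p dvd x^2" hence "p dvd x" by (rule prime_dvd_power[OF assms(1)])
    moreover have "0 < x" "x \<le> h" using assms(3) by auto
    ultimately have "p \<le> x" "x \<le> h" using dvd_imp_le by blast+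
    thus False using ph by linarith
  qed
  have nd2: "\<not> p dvd (x^2 mod p)" using nd by (simp add: dvd_mod_iff)
  have "coprime p (x^2 mod p)" using nd2 by (rule prime_imp_coprime[OF assms(1)])
  hence c: "coprime (x^2 mod p) p" by (simp only: coprime_commute)
  have "0 < x^2 mod p" using nd mod_greater_zero_iff_not_dvd by blast
  moreover have "x^2 mod p < p" using ph by simp
  ultimately have "x^2 mod p \<in> totatives p" using c by (simp add: totatives_def)
  moreover have "Legendre (int (x^2 mod p)) (int p) = 1"
  proof -
    have "\<not> [x^2 mod p = 0] (mod p)" using nd2 by (simp add: cong_0_iff)
    hence "\<not> [int (x^2 mod p) = 0] (mod int p)" using cong_int_iff[of "x^2 mod p" 0 p] by simp
    moreover have "[int x ^ 2 = int (x^2 mod p)] (mod int p)"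
    proof -
      have "[x ^ 2 = x^2 mod p] (mod p)" by (simp add: cong_def)
      hence "[int (x ^ 2) = int (x^2 mod p)] (mod int p)" by (simp only: cong_int_iff)
      thus ?thesis by simp
    qed
    hence "QuadRes (int p) (int (x^2 mod p))" unfolding QuadRes_def by blast
    ultimately show ?thesis by (simp add: Legendre_def)
  qed
  ultimately show "x^2 mod p \<in> QRs p" by (simp add: QRs_def)
qed

lemma sq_bwd:
  fixes p h y :: nat
  assumes "prime p" "h = (p - 1) div 2" "y \<in> QRs p" "odd p"
  shows "y \<in> (\<lambda>x. x^2 mod p) ` {1..h}"
proof -
  have ph: "2 * h < p" "p \<le> 2 * h + 1" using assms(2,4) prime_gt_1_nat[OF assms(1)] by auto
  have yt: "y \<in> totatives p" and L: "Legendre (int y) (int p) = 1" using assms(3) by (auto simp: QRs_def)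
  have y0: "0 < y" "y < p" using yt prime_gt_1_nat[OF assms(1)] by (auto simp: totatives_def totatives_less)
  from L have "QuadRes (int p) (int y)" by (auto simp: Legendre_def split: if_splits)
  then obtain z where z: "[z^2 = int y] (mod int p)" by (auto simp: QuadRes_def)
  define w where "w = nat (z mod int p)"
  have p0: "int p > 0" using y0 by simp
  have wz: "int w = z mod int p" unfolding w_def using p0 by simp
  have "[z mod int p = z] (mod int p)" by (simp add: cong_def)
  hence "[(z mod int p)^2 = z^2] (mod int p)" by (rule cong_pow)
  hence wy0: "[int w ^ 2 = int y] (mod int p)" using z wz by (metis cong_trans)
  hence "[int (w ^ 2) = int y] (mod int p)" by simp
  hence wy: "[w^2 = y] (mod p)" by (simp only: cong_int_iff)
  have "z mod int p < int p" using p0 by simp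
  hence wp: "w < p" using wz by linarith
  have "w \<noteq> 0"
  proof
    assume "w = 0" hence "[0 = y] (mod p)" using wy by simp
    thus False using y0 by (simp add: cong_def)
  qed
  show "y \<in> (\<lambda>x. x^2 mod p) ` {1..h}"
  proof (cases "w \<le> h")
    case True
    have "w^2 mod p = y" using wy y0 by (simp add: cong_def)
    moreover have "w \<in> {1..h}" using True \<open>w \<noteq> 0\<close> by simp
    ultimately show ?thesis by (intro image_eqI[of _ _ w]) auto
  next
    case False
    define v where "v = p - w"
    have v: "v \<in> {1..h}" using False wp ph unfolding v_def by auto
    have "int v = int p - int w" unfolding v_def using wp by simp
    hence "[int v = - int w] (mod int p)" by (simp add: cong_iff_dvd_diff)
    hence "[int v ^ 2 = (- int w)^2] (mod int p)" by (rule cong_pow)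
    hence "[int v ^ 2 = int y] (mod int p)" using wy0
      by (simp add: cong_trans)
    hence "[int (v ^ 2) = int y] (mod int p)" by simp
    hence "[v^2 = y] (mod p)" by (simp only: cong_int_iff)
    hence "v^2 mod p = y" using y0 by (simp add: cong_def)
    thus ?thesis using v by (intro image_eqI[of _ _ v]) auto
  qed
qed

lemma card_QRs:
  assumes "prime p" "p > 2"
  shows "card (QRs p) = (p - 1) div 2"
proof -
  define h where "h = (p - 1) div 2"
  have ph: "2 * h < p" unfolding h_def using assms by auto
  have "bij_betw (\<lambda>x. x^2 mod p) {1..h} (QRs p)"
  proof (rule bij_betw_imageI)
    show "inj_on (\<lambda>x. x^2 mod p) {1..h}" by (rule sq_inj[OF assms(1) ph])
    show "(\<lambda>x. x^2 mod p) ` {1..h} = QRs p"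
      using sq_fwd[OF assms(1) ph] sq_bwd[OF assms(1) h_def _ prime_odd_nat[OF assms]] by blast
  qed
  from bij_betw_same_card[OF this] show ?thesis by (simp add: h_def)
qed

definition Qs :: "nat list \<Rightarrow> nat set" where
  "Qs ps = {x \<in> totatives (prod_list ps). \<forall>p\<in>set ps. Legendre (int x) (int p) = 1}"

lemma Legendre_mod_dvd:
  assumes "q dvd m"
  shows "Legendre (int (x mod m)) (int q) = Legendre (int x) (int q)"
proof -
  have "[x mod m = x] (mod m)" by (simp add: cong_def)
  hence "[x mod m = x] (mod q)" using assms by (rule cong_dvd_modulus_nat)
  hence "[int (x mod m) = int x] (mod int q)" by (simp only: cong_int_iff)
  thus ?thesis by (rule Legendre_cong)
qed

lemma coprime_prod_list_primes:
  fixes p :: nat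
  assumes "distinct (p # ps)" "\<forall>q\<in>set (p # ps). prime q"
  shows "coprime p (prod_list ps)"
proof -
  have "\<forall>q\<in>set ps. coprime p q"
  proof
    fix q assume "q \<in> set ps"
    hence "prime q" "prime p" "p \<noteq> q" using assms by auto
    thus "coprime p q" using primes_coprime by blast
  qed
  thus ?thesis
  proof (induction ps)
    case (Cons a ps)
    hence "coprime p a" "coprime p (prod_list ps)" by simp_all
    thus ?case by simp
  qed simp
qed

lemma card_Qs:
  assumes "distinct ps" "\<forall>p\<in>set ps. prime p \<and> p > 2"
  shows "card (Qs ps) = prod_list (map (\<lambda>p. (p - 1) div 2) ps)"
  using assms
proof (induction ps)
  case Nil
  have "Qs [] = totatives 1" by (simp add: Qs_def)
  hence "card (Qs []) = totient 1" by (simp add: totient_def)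
  thus ?case by simp
next
  case (Cons p ps)
  have pp: "prime p" "p > 2" using Cons.prems by auto
  show ?case
  proof (cases "ps = []")
    case True
    have "Qs [p] = QRs p" by (simp add: Qs_def QRs_def)
    thus ?thesis using True card_QRs[OF pp] by simp
  next
    case False
    define D' where "D' = prod_list ps"
    have "distinct ps" "\<forall>p\<in>set ps. prime p \<and> p > 2" using Cons.prems by auto
    hence IH: "card (Qs ps) = prod_list (map (\<lambda>p. (p - 1) div 2) ps)"
      by (rule Cons.IH)
    have "0 \<notin> set ps" using Cons.prems by auto
    hence "D' \<noteq> 0" unfolding D'_def by (simp add: prod_list_zero_iff)
    obtain q qs where ps: "ps = q # qs" using False by (cases ps) auto
    have "q > 2" "q dvd D'" using Cons.prems ps unfolding D'_def by auto
    have "q \<le> D'" using \<open>q dvd D'\<close> \<open>D' \<noteq> 0\<close> by (intro dvd_imp_le) auto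
    hence D1: "D' > 1" using \<open>q > 2\<close> by linarith
    have dps: "distinct (p # ps)" using Cons.prems(1) .
    have pps: "\<forall>q\<in>set (p # ps). prime q" using Cons.prems(2) by blast
    have cop: "coprime p D'" unfolding D'_def
      by (rule coprime_prod_list_primes[OF dps pps])
    have p1: "p > 1" using pp by simp
    have bij: "bij_betw (\<lambda>x. (x mod p, x mod D')) (totatives (p * D')) (totatives p \<times> totatives D')"
      by (rule bij_betw_totatives[OF p1 D1 cop])
    have sub: "Qs (p # ps) \<subseteq> totatives (p * D')" unfolding Qs_def D'_def by simp
    have img: "(\<lambda>x. (x mod p, x mod D')) ` Qs (p # ps) = QRs p \<times> Qs ps"
    proof safe
      fix x assume x: "x \<in> Qs (p # ps)"
      hence xt: "x \<in> totatives (p * D')" using sub by blast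
      have "(x mod p, x mod D') \<in> totatives p \<times> totatives D'"
        using bij xt by (rule bij_betw_apply)
      moreover have "Legendre (int (x mod p)) (int p) = 1"
        using x Legendre_mod_dvd[of p p x] by (simp add: Qs_def)
      moreover have "\<forall>q\<in>set ps. Legendre (int (x mod D')) (int q) = 1"
      proof
        fix q assume q: "q \<in> set ps"
        hence "q dvd D'" unfolding D'_def by (simp add: prod_list_dvd)
        thus "Legendre (int (x mod D')) (int q) = 1"
          using x q Legendre_mod_dvd[of q D' x] by (simp add: Qs_def)
      qed
      ultimately show "x mod p \<in> QRs p" "x mod D' \<in> Qs ps"
        unfolding QRs_def Qs_def D'_def by simp_all
    next
      fix a b assume a: "a \<in> QRs p" and b: "b \<in> Qs ps"
      have "a \<in> totatives p" using a unfolding QRs_def by simp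
      moreover have "b \<in> totatives D'" using b unfolding Qs_def D'_def by simp
      ultimately have "(a, b) \<in> totatives p \<times> totatives D'" by simp
      hence "(a, b) \<in> (\<lambda>x. (x mod p, x mod D')) ` totatives (p * D')"
        using bij by (simp add: bij_betw_def)
      then obtain x where xt: "x \<in> totatives (p * D')" and xe: "(a, b) = (x mod p, x mod D')"
        by (rule imageE) blast
      have "Legendre (int x) (int p) = 1"
        using a xe Legendre_mod_dvd[of p p x] by (simp add: QRs_def)
      moreover have "\<forall>q\<in>set ps. Legendre (int x) (int q) = 1"
      proof
        fix q assume q: "q \<in> set ps"
        hence "q dvd D'" unfolding D'_def by (simp add: prod_list_dvd)
        thus "Legendre (int x) (int q) = 1"
          using b q xe Legendre_mod_dvd[of q D' x] by (simp add: Qs_def)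
      qed
      ultimately have "x \<in> Qs (p # ps)" using xt by (simp add: Qs_def D'_def)
      thus "(a, b) \<in> (\<lambda>x. (x mod p, x mod D')) ` Qs (p # ps)" using xe by blast
    qed
    have inj: "inj_on (\<lambda>x. (x mod p, x mod D')) (Qs (p # ps))"
      using inj_on_subset[OF bij_betw_imp_inj_on[OF bij] sub] .
    have "card (Qs (p # ps)) = card ((\<lambda>x. (x mod p, x mod D')) ` Qs (p # ps))"
      using card_image[OF inj] by simp
    also have "\<dots> = card (QRs p \<times> Qs ps)" by (simp only: img)
    finally have "card (Qs (p # ps)) = card (QRs p \<times> Qs ps)" .
    also have "\<dots> = card (QRs p) * card (Qs ps)" by (rule card_cartesian_product)
    finally show ?thesis using IH card_QRs[OF pp] by simp
  qed
qed

lemma Legendre_dvd0: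
  assumes "p dvd x" shows "Legendre (int x) (int p) = 0"
proof -
  have "[int x = 0] (mod int p)" using assms by (simp add: cong_0_iff)
  thus ?thesis by (simp add: Legendre_def)
qed

lemma in_Qs_iff:
  assumes "\<forall>p\<in>set ps. prime p"
  shows "x \<in> Qs ps \<longleftrightarrow> 0 < x \<and> x \<le> prod_list ps \<and> (\<forall>p\<in>set ps. Legendre (int x) (int p) = 1)"
proof
  assume "x \<in> Qs ps"
  thus "0 < x \<and> x \<le> prod_list ps \<and> (\<forall>p\<in>set ps. Legendre (int x) (int p) = 1)"
    unfolding Qs_def totatives_def by simp
next
  assume a: "0 < x \<and> x \<le> prod_list ps \<and> (\<forall>p\<in>set ps. Legendre (int x) (int p) = 1)"
  have "\<forall>p\<in>set ps. coprime x p"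
  proof
    fix p assume p: "p \<in> set ps"
    have "\<not> p dvd x"
    proof
      assume "p dvd x"
      hence "Legendre (int x) (int p) = 0" by (rule Legendre_dvd0)
      thus False using a p by simp
    qed
    hence "coprime p x" using assms p prime_imp_coprime by blast
    thus "coprime x p" by (simp add: coprime_commute)
  qed
  hence "coprime x (prod_list ps)"
  proof (induction ps)
    case (Cons a ps)
    hence "coprime x a" "coprime x (prod_list ps)" by simp_all
    thus ?case by simp
  qed simp
  thus "x \<in> Qs ps" using a unfolding Qs_def totatives_def by simp
qed

lemma Qs_reflect:
  assumes "\<forall>p\<in>set ps. prime p \<and> p mod 4 = 1" "ps \<noteq> []" "x \<in> Qs ps"
  shows "prod_list ps - x \<in> Qs ps" "x < prod_list ps"
proof -
  define D where "D = prod_list ps"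
  have pr: "\<forall>p\<in>set ps. prime p" using assms(1) by blast
  have x: "0 < x" "x \<le> D" "\<forall>p\<in>set ps. Legendre (int x) (int p) = 1"
    using assms(3) in_Qs_iff[OF pr] unfolding D_def by auto
  obtain p0 where p0: "p0 \<in> set ps" using assms(2) by (cases ps) auto
  have "p0 dvd D" unfolding D_def using p0 by (rule prod_list_dvd)
  have "x \<noteq> D"
  proof
    assume "x = D"
    hence "Legendre (int x) (int p0) = 0" using \<open>p0 dvd D\<close> Legendre_dvd0 by blast
    thus False using x p0 by simp
  qed
  thus xD: "x < prod_list ps" using x unfolding D_def by simp
  have "\<forall>p\<in>set ps. Legendre (int (D - x)) (int p) = 1"
  proof
    fix p assume p: "p \<in> set ps"
    have pp: "prime p" "p mod 4 = 1" using assms(1) p by auto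
    have p2: "p > 2" using pp prime_gt_1_nat[OF pp(1)] by presburger
    have "p dvd D" unfolding D_def using p by (rule prod_list_dvd)
    hence "int p dvd int D" by simp
    moreover have "int (D - x) = int D - int x" using x by simp
    ultimately have "[int (D - x) = - int x] (mod int p)"
      by (simp add: cong_iff_dvd_diff)
    hence "Legendre (int (D - x)) (int p) = Legendre (- int x) (int p)" by (rule Legendre_cong)
    also have "- int x = (-1) * int x" by simp
    also have "Legendre ((-1) * int x) (int p) = Legendre (-1) (int p) * Legendre (int x) (int p)"
      by (rule Legendre_mult[OF pp(1) p2])
    also have "\<dots> = 1" using Legendre_minus1[OF pp] x p by simp
    finally show "Legendre (int (D - x)) (int p) = 1" .
  qed
  moreover have "0 < D - x" "D - x \<le> D" using xD unfolding D_def by auto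
  ultimately show "prod_list ps - x \<in> Qs ps" using in_Qs_iff[OF pr] unfolding D_def by simp
qed

lemma card_Qs_odd:
  assumes "\<forall>p\<in>set ps. prime p \<and> p mod 4 = 1" "ps \<noteq> []"
  shows "card (Qs ps) = 2 * card {x \<in> Qs ps. odd x}"
proof -
  define D where "D = prod_list ps"
  have "odd D" unfolding D_def using assms(1)
  proof (induction ps)
    case (Cons a ps)
    hence "a mod 4 = 1" by simp
    hence "odd a" by presburger
    moreover have "odd (prod_list ps)" using Cons by simp
    ultimately show ?case by simp
  qed simp
  have fin: "finite (Qs ps)" unfolding Qs_def by simp
  define Od where "Od = {x \<in> Qs ps. odd x}"
  define Ev where "Ev = {x \<in> Qs ps. even x}"
  have "Qs ps = Od \<union> Ev" "Od \<inter> Ev = {}" unfolding Od_def Ev_def by auto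
  hence "card (Qs ps) = card Od + card Ev"
    using fin by (simp add: card_Un_disjoint)
  moreover have "Ev = (\<lambda>x. D - x) ` Od"
  proof
    show "Ev \<subseteq> (\<lambda>x. D - x) ` Od"
    proof
      fix y assume y: "y \<in> Ev"
      hence yq: "y \<in> Qs ps" "even y" unfolding Ev_def by auto
      have "D - y \<in> Qs ps" "y < D" using Qs_reflect[OF assms yq(1)] unfolding D_def by auto
      moreover have "odd (D - y)" using \<open>odd D\<close> yq(2) \<open>y < D\<close> by simp
      moreover have "y = D - (D - y)" using \<open>y < D\<close> by simp
      ultimately show "y \<in> (\<lambda>x. D - x) ` Od" unfolding Od_def by blast
    qed
    show "(\<lambda>x. D - x) ` Od \<subseteq> Ev"
    proof
      fix y assume "y \<in> (\<lambda>x. D - x) ` Od"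
      then obtain x where x: "x \<in> Od" "y = D - x" by blast
      hence xq: "x \<in> Qs ps" "odd x" unfolding Od_def by auto
      have "D - x \<in> Qs ps" "x < D" using Qs_reflect[OF assms xq(1)] unfolding D_def by auto
      moreover have "even (D - x)" using \<open>odd D\<close> xq(2) \<open>x < D\<close> by simp
      ultimately show "y \<in> Ev" unfolding Ev_def using x by simp
    qed
  qed
  moreover have "inj_on (\<lambda>x. D - x) Od"
  proof (rule inj_onI)
    fix x y assume "x \<in> Od" "y \<in> Od" "D - x = D - y"
    moreover have "x < D" "y < D" using \<open>x \<in> Od\<close> \<open>y \<in> Od\<close> Qs_reflect[OF assms] unfolding Od_def D_def by auto
    ultimately show "x = y" by simp
  qed
  ultimately have "card (Qs ps) = card Od + card Od" by (simp add: card_image)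
  thus ?thesis unfolding Od_def by simp
qed

lemma prod_half1:
  assumes "\<forall>p\<in>set ps. p mod 8 = (5::nat)"
  shows "prod_list (map (\<lambda>p. (p - 1) div 2) ps) = 2 ^ length ps * prod_list (map (\<lambda>p. (p - 1) div 4) ps)"
  using assms
proof (induction ps)
  case (Cons a ps)
  have "a mod 8 = 5" using Cons.prems by simp
  hence "(a - 1) div 2 = 2 * ((a - 1) div 4)" by presburger
  thus ?case using Cons by simp
qed simp

lemma prod_half2:
  assumes "\<forall>p\<in>set ps. p mod 8 = (5::nat)"
  shows "odd (prod_list (map (\<lambda>p. (p - 1) div 4) ps))"
  using assms
proof (induction ps)
  case (Cons a ps)
  have "a mod 8 = 5" using Cons.prems by simp
  hence "odd ((a - 1) div 4)" by presburger
  thus ?case using Cons by simp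
qed simp

lemma sq_mod4:
  fixes a :: int
  shows "[a^2 = (if odd a then 1 else 0)] (mod 4)"
proof (cases "odd a")
  case True
  then obtain k where k: "a = 2 * k + 1" by (auto elim: oddE)
  have "a^2 - 1 = 4 * (k * k + k)" unfolding k by (simp add: power2_eq_square algebra_simps)
  hence "4 dvd a^2 - 1" by simp
  thus ?thesis using True by (simp add: cong_iff_dvd_diff)
next
  case False
  then obtain k where k: "a = 2 * k" by (auto elim: evenE)
  have "a^2 = 4 * (k * k)" unfolding k by (simp add: power2_eq_square algebra_simps)
  hence "4 dvd a^2" by simp
  thus ?thesis using False by (simp add: cong_0_iff)
qed

theorem lemma3p7:
  fixes ps :: "nat list" and n :: nat and D :: nat
    and G :: "int set" and s1 :: int
  assumes "distinct ps"
    and "\<forall>p\<in>set ps. prime p \<and> p mod 8 = 5"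
    and "n = length ps" and "n \<ge> 1"
    and "D = prod_list ps"
    and "G = {a::int. 1 \<le> a \<and> a \<le> int D \<and> (\<forall>p\<in>set ps. kronecker (int p) (nat a) = 1)}"
    and "s1 = (\<Sum>a\<in>G. a ^ 2)"
  shows "(\<exists>t::int. odd t \<and> [s1 = 2 ^ (n - 1) * t] (mod 4)) \<and> (n \<ge> 3 \<longrightarrow> 4 dvd s1)"
proof -
  have pr: "\<forall>p\<in>set ps. prime p" using assms(2) by blast
  have p4: "\<forall>p\<in>set ps. prime p \<and> p mod 4 = 1"
  proof
    fix p assume "p \<in> set ps"
    hence "prime p" "p mod 8 = 5" using assms(2) by auto
    thus "prime p \<and> p mod 4 = 1" by presburger
  qed
  have p2: "\<forall>p\<in>set ps. prime p \<and> p > 2"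
  proof
    fix p assume "p \<in> set ps"
    hence "prime p" "p mod 8 = 5" using assms(2) by auto
    thus "prime p \<and> p > 2" by presburger
  qed
  have p8: "\<forall>p\<in>set ps. p mod 8 = (5::nat)" using assms(2) by blast
  have ne: "ps \<noteq> []" using assms(3,4) by auto
  define Od where "Od = {x \<in> Qs ps. odd x}"
  define t where "t = prod_list (map (\<lambda>p. (p - 1) div 4) ps)"
  have todd: "odd t" unfolding t_def by (rule prod_half2[OF p8])
  have "card (Qs ps) = 2 ^ n * t"
    using card_Qs[OF assms(1) p2] prod_half1[OF p8] assms(3) unfolding t_def by simp
  moreover have "card (Qs ps) = 2 * card Od" unfolding Od_def by (rule card_Qs_odd[OF p4 ne])
  ultimately have cOd: "card Od = 2 ^ (n - 1) * t"
    using assms(4) by (cases n) auto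
  have GO: "{a \<in> G. odd a} = int ` Od"
  proof
    show "{a \<in> G. odd a} \<subseteq> int ` Od"
    proof
      fix a assume "a \<in> {a \<in> G. odd a}"
      hence a: "1 \<le> a" "a \<le> int D" "\<forall>p\<in>set ps. kronecker (int p) (nat a) = 1" "odd a"
        using assms(6) by auto
      have on: "odd (nat a)" using a(1,4) by (simp add: even_nat_iff)
      have "\<forall>p\<in>set ps. Legendre (int (nat a)) (int p) = 1"
      proof
        fix p assume p: "p \<in> set ps"
        have "prime p" "p mod 4 = 1" using p4 p by auto
        from kronecker_odd[OF this on] a(3) p show "Legendre (int (nat a)) (int p) = 1" by simp
      qed
      moreover have "0 < nat a" "nat a \<le> prod_list ps" using a(1,2) assms(5) by auto
      ultimately have "nat a \<in> Qs ps" using in_Qs_iff[OF pr] by simp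
      hence "nat a \<in> Od" using on unfolding Od_def by simp
      moreover have "a = int (nat a)" using a(1) by simp
      ultimately show "a \<in> int ` Od" by blast
    qed
    show "int ` Od \<subseteq> {a \<in> G. odd a}"
    proof
      fix a assume "a \<in> int ` Od"
      then obtain x where x: "x \<in> Od" "a = int x" by blast
      hence xq: "x \<in> Qs ps" "odd x" unfolding Od_def by auto
      hence xx: "0 < x" "x \<le> D" "\<forall>p\<in>set ps. Legendre (int x) (int p) = 1"
        using in_Qs_iff[OF pr] assms(5) by auto
      have "\<forall>p\<in>set ps. kronecker (int p) x = 1"
      proof
        fix p assume p: "p \<in> set ps"
        have "prime p" "p mod 4 = 1" using p4 p by auto
        from kronecker_odd[OF this xq(2)] xx(3) p show "kronecker (int p) x = 1" by simp
      qed
      hence "a \<in> G" using xx x(2) assms(6) by simp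
      moreover have "odd a" using x(2) xq(2) by simp
      ultimately show "a \<in> {a \<in> G. odd a}" by simp
    qed
  qed
  have cG: "card {a \<in> G. odd a} = card Od" unfolding GO by (simp add: card_image)
  have finG: "finite G" 
  proof (rule finite_subset)
    show "G \<subseteq> {1..int D}" using assms(6) by auto
  qed simp
  have "[s1 = (\<Sum>a\<in>G. if odd a then 1 else 0)] (mod 4)"
    unfolding assms(7) by (rule cong_sum) (rule sq_mod4)
  also have "(\<Sum>a\<in>G. if odd a then (1::int) else 0) = (\<Sum>a\<in>{a \<in> G. odd a}. 1)"
    using sum.inter_filter[OF finG, of "\<lambda>_. (1::int)" odd] by simp
  also have "\<dots> = int (card {a \<in> G. odd a})" by simp
  also have "\<dots> = 2 ^ (n - 1) * int t" using cG cOd by simp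
  finally have main: "[s1 = 2 ^ (n - 1) * int t] (mod 4)" .
  have "odd (int t)" using todd by simp
  hence part1: "\<exists>t::int. odd t \<and> [s1 = 2 ^ (n - 1) * t] (mod 4)" using main by blast
  have part2: "4 dvd s1" if "n \<ge> 3"
  proof -
    have e: "n - 1 = (n - 3) + 2" using that by simp
    have "(2::int) ^ (n - 1) = 2 ^ (n - 3) * 2 ^ 2" by (simp only: e power_add)
    hence "(2::int) ^ (n - 1) = 4 * 2 ^ (n - 3)" by simp
    hence "[2 ^ (n - 1) * int t = 0] (mod 4)" by (simp add: cong_0_iff)
    with main have "[s1 = 0] (mod 4)" by (rule cong_trans)
    thus ?thesis by (simp add: cong_0_iff)
  qed
  show ?thesis using part1 part2 by blast
qed

end
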